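(* Let $G_*$ be a (not necessarily symmetric) crossed simplicial group with structural projection $\pi\colon G_*\to N_*$, and suppose there exists a morphism of simplicial sets $\eta\colon N_*\to G_*$ with $\pi\circ\eta=\mathrm{id}_{N_*}$. Then $\pi\colon G_*\to N_*$ is a Kan fibration of simplicial sets.
   Context: A crossed simplicial group $G_*$ consists of groups $G_n$ ($n\ge0$), a left action of $G_n$ on $[n]=\{0,\dots,n\}$, and maps $d_i\colon G_n\to G_{n-1}$, $s_i\colon G_n\to G_{n+1}$ making $G_*$ a simplicial set, such that $d_i(gh)=d_i(g)d_{g^{-1}(i)}(h)$ and $s_i(gh)=s_i(g)s_{g^{-1}(i)}(h)$. By the structure theorem of Fiedorowicz–Loday and Krasauskas there is a canonical short exact sequence of crossed simplicial groups $1\to P_*\to G_*\xrightarrow{\pi}N_*\to1$ where $P_*$ is a simplicial group and $N_*$ is one of the seven crossed simplicial groups $\{1\}, C_*, \mathbb{Z}/2, S_*, D_*, \mathbb{Z}/2\times S_*, H_*$; $\pi$ is called the structural projection. *)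

theory Defs
  imports "HOL-Algebra.Group"
begin

text \<open>The face map d n i sends
  X (Suc n) to X n (for i \<le> Suc n); the degeneracy s n i sends X n to
  X (Suc n) (for i \<le> n).\<close>

definition simplicial_set ::
  "(nat \<Rightarrow> 'a set) \<Rightarrow> (nat \<Rightarrow> nat \<Rightarrow> 'a \<Rightarrow> 'a) \<Rightarrow> (nat \<Rightarrow> nat \<Rightarrow> 'a \<Rightarrow> 'a) \<Rightarrow> bool" where
  "simplicial_set X d s \<longleftrightarrow>
     (\<forall>n i x. i \<le> Suc n \<longrightarrow> x \<in> X (Suc n) \<longrightarrow> d n i x \<in> X n) \<and>
     (\<forall>n i x. i \<le> n \<longrightarrow> x \<in> X n \<longrightarrow> s n i x \<in> X (Suc n)) \<and>
     (\<forall>n i j x. i < j \<longrightarrow> j \<le> Suc (Suc n) \<longrightarrow> x \<in> X (Suc (Suc n)) \<longrightarrow>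
        d n i (d (Suc n) j x) = d n (j - 1) (d (Suc n) i x)) \<and>
     (\<forall>n i j x. i < j \<longrightarrow> j \<le> Suc n \<longrightarrow> x \<in> X (Suc n) \<longrightarrow>
        d (Suc n) i (s (Suc n) j x) = s n (j - 1) (d n i x)) \<and>
     (\<forall>n j x. j \<le> n \<longrightarrow> x \<in> X n \<longrightarrow> d n j (s n j x) = x \<and> d n (Suc j) (s n j x) = x) \<and>
     (\<forall>n i j x. Suc j < i \<longrightarrow> i \<le> Suc (Suc n) \<longrightarrow> x \<in> X (Suc n) \<longrightarrow>
        d (Suc n) i (s (Suc n) j x) = s n j (d n (i - 1) x)) \<and>
     (\<forall>n i j x. i \<le> j \<longrightarrow> j \<le> n \<longrightarrow> x \<in> X n \<longrightarrow>
        s (Suc n) i (s n j x) = s (Suc n) (Suc j) (s n i x))"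

definition simplicial_map ::
  "(nat \<Rightarrow> 'a set) \<Rightarrow> (nat \<Rightarrow> nat \<Rightarrow> 'a \<Rightarrow> 'a) \<Rightarrow> (nat \<Rightarrow> nat \<Rightarrow> 'a \<Rightarrow> 'a) \<Rightarrow>
   (nat \<Rightarrow> 'b set) \<Rightarrow> (nat \<Rightarrow> nat \<Rightarrow> 'b \<Rightarrow> 'b) \<Rightarrow> (nat \<Rightarrow> nat \<Rightarrow> 'b \<Rightarrow> 'b) \<Rightarrow>
   (nat \<Rightarrow> 'a \<Rightarrow> 'b) \<Rightarrow> bool" where
  "simplicial_map X d s Y d' s' f \<longleftrightarrow>
     (\<forall>n x. x \<in> X n \<longrightarrow> f n x \<in> Y n) \<and>
     (\<forall>n i x. i \<le> Suc n \<longrightarrow> x \<in> X (Suc n) \<longrightarrow> f n (d n i x) = d' n i (f (Suc n) x)) \<and>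
     (\<forall>n i x. i \<le> n \<longrightarrow> x \<in> X n \<longrightarrow> f (Suc n) (s n i x) = s' n i (f n x))"

text \<open>The horn is given by faces xs i \<in> X n for i \<in> [n+1] - {k}, compatible in the sense
  d_i x_j = d_(j-1) x_i for i < j (a vacuous condition when n = 0).\<close>

definition kan_fibration ::
  "(nat \<Rightarrow> 'a set) \<Rightarrow> (nat \<Rightarrow> nat \<Rightarrow> 'a \<Rightarrow> 'a) \<Rightarrow> (nat \<Rightarrow> nat \<Rightarrow> 'a \<Rightarrow> 'a) \<Rightarrow>
   (nat \<Rightarrow> 'b set) \<Rightarrow> (nat \<Rightarrow> nat \<Rightarrow> 'b \<Rightarrow> 'b) \<Rightarrow> (nat \<Rightarrow> nat \<Rightarrow> 'b \<Rightarrow> 'b) \<Rightarrow>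
   (nat \<Rightarrow> 'a \<Rightarrow> 'b) \<Rightarrow> bool" where
  "kan_fibration X d s Y d' s' f \<longleftrightarrow>
     simplicial_map X d s Y d' s' f \<and>
     (\<forall>n k xs y.
        k \<le> Suc n \<longrightarrow>
        (\<forall>i. i \<le> Suc n \<longrightarrow> i \<noteq> k \<longrightarrow> xs i \<in> X n) \<longrightarrow>
        (\<forall>i j. i < j \<longrightarrow> j \<le> Suc n \<longrightarrow> i \<noteq> k \<longrightarrow> j \<noteq> k \<longrightarrow> 0 < n \<longrightarrow>
            d (n - 1) i (xs j) = d (n - 1) (j - 1) (xs i)) \<longrightarrow>
        y \<in> Y (Suc n) \<longrightarrow>
        (\<forall>i. i \<le> Suc n \<longrightarrow> i \<noteq> k \<longrightarrow> d' n i y = f n (xs i)) \<longrightarrow>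
        (\<exists>x \<in> X (Suc n). (\<forall>i. i \<le> Suc n \<longrightarrow> i \<noteq> k \<longrightarrow> d n i x = xs i) \<and> f (Suc n) x = y))"

definition crossed_simplicial_group ::
  "(nat \<Rightarrow> 'a monoid) \<Rightarrow> (nat \<Rightarrow> 'a \<Rightarrow> nat \<Rightarrow> nat) \<Rightarrow>
   (nat \<Rightarrow> nat \<Rightarrow> 'a \<Rightarrow> 'a) \<Rightarrow> (nat \<Rightarrow> nat \<Rightarrow> 'a \<Rightarrow> 'a) \<Rightarrow> bool" where
  "crossed_simplicial_group G act d s \<longleftrightarrow>
     (\<forall>n. group (G n)) \<and>
     simplicial_set (\<lambda>n. carrier (G n)) d s \<and>
     (\<forall>n g. g \<in> carrier (G n) \<longrightarrow> bij_betw (act n g) {..n} {..n}) \<and>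
     (\<forall>n i. i \<le> n \<longrightarrow> act n \<one>\<^bsub>G n\<^esub> i = i) \<and>
     (\<forall>n g h i. g \<in> carrier (G n) \<longrightarrow> h \<in> carrier (G n) \<longrightarrow> i \<le> n \<longrightarrow>
        act n (g \<otimes>\<^bsub>G n\<^esub> h) i = act n g (act n h i)) \<and>
     (\<forall>n i g h. i \<le> Suc n \<longrightarrow> g \<in> carrier (G (Suc n)) \<longrightarrow> h \<in> carrier (G (Suc n)) \<longrightarrow>
        d n i (g \<otimes>\<^bsub>G (Suc n)\<^esub> h) =
        d n i g \<otimes>\<^bsub>G n\<^esub> d n (act (Suc n) (inv\<^bsub>G (Suc n)\<^esub> g) i) h) \<and>
     (\<forall>n i g h. i \<le> n \<longrightarrow> g \<in> carrier (G n) \<longrightarrow> h \<in> carrier (G n) \<longrightarrow>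
        s n i (g \<otimes>\<^bsub>G n\<^esub> h) =
        s n i g \<otimes>\<^bsub>G (Suc n)\<^esub> s n (act n (inv\<^bsub>G n\<^esub> g) i) h)"

definition csg_morphism ::
  "(nat \<Rightarrow> 'a monoid) \<Rightarrow> (nat \<Rightarrow> 'a \<Rightarrow> nat \<Rightarrow> nat) \<Rightarrow>
   (nat \<Rightarrow> nat \<Rightarrow> 'a \<Rightarrow> 'a) \<Rightarrow> (nat \<Rightarrow> nat \<Rightarrow> 'a \<Rightarrow> 'a) \<Rightarrow>
   (nat \<Rightarrow> 'b monoid) \<Rightarrow> (nat \<Rightarrow> 'b \<Rightarrow> nat \<Rightarrow> nat) \<Rightarrow>
   (nat \<Rightarrow> nat \<Rightarrow> 'b \<Rightarrow> 'b) \<Rightarrow> (nat \<Rightarrow> nat \<Rightarrow> 'b \<Rightarrow> 'b) \<Rightarrow>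
   (nat \<Rightarrow> 'a \<Rightarrow> 'b) \<Rightarrow> bool" where
  "csg_morphism G act d s H act' d' s' f \<longleftrightarrow>
     (\<forall>n. f n \<in> hom (G n) (H n)) \<and>
     simplicial_map (\<lambda>n. carrier (G n)) d s (\<lambda>n. carrier (H n)) d' s' f \<and>
     (\<forall>n g i. g \<in> carrier (G n) \<longrightarrow> i \<le> n \<longrightarrow> act' n (f n g) i = act n g i)"

fun iter_degen :: "(nat \<Rightarrow> nat \<Rightarrow> 'a \<Rightarrow> 'a) \<Rightarrow> nat \<Rightarrow> nat list \<Rightarrow> 'a \<Rightarrow> 'a" where
  "iter_degen s n [] g = g"
| "iter_degen s n (i # is) g = iter_degen s (Suc n) is (s n i g)"

definition admissible_degen :: "nat \<Rightarrow> nat list \<Rightarrow> bool" where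
  "admissible_degen n is \<longleftrightarrow> (\<forall>k < length is. is ! k \<le> n + k)"

text \<open>The canonical normal simplicial subgroup P of the structure theorem
  (Fiedorowicz--Loday, Krasauskas): the elements g of G n that are mapped to the identity
  of the hyperoctahedral crossed simplicial group, i.e. g and all of its iterated
  degeneracies act trivially (on [n], resp. on the higher [m]).\<close>

definition structural_kernel ::
  "(nat \<Rightarrow> 'a monoid) \<Rightarrow> (nat \<Rightarrow> 'a \<Rightarrow> nat \<Rightarrow> nat) \<Rightarrow> (nat \<Rightarrow> nat \<Rightarrow> 'a \<Rightarrow> 'a) \<Rightarrow> nat \<Rightarrow> 'a set" where
  "structural_kernel G act s n =
     {g \<in> carrier (G n). \<forall>is. admissible_degen n is \<longrightarrow>
        (\<forall>j \<le> n + length is. act (n + length is) (iter_degen s n is g) j = j)}"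

text \<open>The structural projection G \<rightarrow> N: a levelwise surjective morphism of crossed
  simplicial groups whose kernel is exactly the canonical subgroup P; thus N is
  (canonically isomorphic to) G/P, the crossed simplicial group of the structure theorem.\<close>

definition structural_projection ::
  "(nat \<Rightarrow> 'a monoid) \<Rightarrow> (nat \<Rightarrow> 'a \<Rightarrow> nat \<Rightarrow> nat) \<Rightarrow>
   (nat \<Rightarrow> nat \<Rightarrow> 'a \<Rightarrow> 'a) \<Rightarrow> (nat \<Rightarrow> nat \<Rightarrow> 'a \<Rightarrow> 'a) \<Rightarrow>
   (nat \<Rightarrow> 'b monoid) \<Rightarrow> (nat \<Rightarrow> 'b \<Rightarrow> nat \<Rightarrow> nat) \<Rightarrow>
   (nat \<Rightarrow> nat \<Rightarrow> 'b \<Rightarrow> 'b) \<Rightarrow> (nat \<Rightarrow> nat \<Rightarrow> 'b \<Rightarrow> 'b) \<Rightarrow>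
   (nat \<Rightarrow> 'a \<Rightarrow> 'b) \<Rightarrow> bool" where
  "structural_projection G act d s N act' d' s' p \<longleftrightarrow>
     crossed_simplicial_group N act' d' s' \<and>
     csg_morphism G act d s N act' d' s' p \<and>
     (\<forall>n. p n ` carrier (G n) = carrier (N n)) \<and>
     (\<forall>n g. g \<in> carrier (G n) \<longrightarrow> (p n g = \<one>\<^bsub>N n\<^esub> \<longleftrightarrow> g \<in> structural_kernel G act s n))"

end

theory Submission
  imports Defs
begin

lemma csg_parts:
  assumes "crossed_simplicial_group G act d s"
  shows csg_grp: "\<And>n. group (G n)"
    and csg_ss: "simplicial_set (\<lambda>n. carrier (G n)) d s"
    and csg_act1: "\<And>n i. i \<le> n \<Longrightarrow> act n \<one>\<^bsub>G n\<^esub> i = i"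
    and csg_dm: "\<And>n i g h. i \<le> Suc n \<Longrightarrow> g \<in> carrier (G (Suc n)) \<Longrightarrow> h \<in> carrier (G (Suc n)) \<Longrightarrow>
        d n i (g \<otimes>\<^bsub>G (Suc n)\<^esub> h) =
        d n i g \<otimes>\<^bsub>G n\<^esub> d n (act (Suc n) (inv\<^bsub>G (Suc n)\<^esub> g) i) h"
    and csg_sm: "\<And>n i g h. i \<le> n \<Longrightarrow> g \<in> carrier (G n) \<Longrightarrow> h \<in> carrier (G n) \<Longrightarrow>
        s n i (g \<otimes>\<^bsub>G n\<^esub> h) =
        s n i g \<otimes>\<^bsub>G (Suc n)\<^esub> s n (act n (inv\<^bsub>G n\<^esub> g) i) h"
proof -
  note A = assms[unfolded crossed_simplicial_group_def]
  show "\<And>n. group (G n)" using A[THEN conjunct1] by (rule spec)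
  show "simplicial_set (\<lambda>n. carrier (G n)) d s" using A[THEN conjunct2, THEN conjunct1] .
  show "\<And>n i. i \<le> n \<Longrightarrow> act n \<one>\<^bsub>G n\<^esub> i = i"
    using A[THEN conjunct2, THEN conjunct2, THEN conjunct2, THEN conjunct1, rule_format] .
  show "\<And>n i g h. i \<le> Suc n \<Longrightarrow> g \<in> carrier (G (Suc n)) \<Longrightarrow> h \<in> carrier (G (Suc n)) \<Longrightarrow>
        d n i (g \<otimes>\<^bsub>G (Suc n)\<^esub> h) =
        d n i g \<otimes>\<^bsub>G n\<^esub> d n (act (Suc n) (inv\<^bsub>G (Suc n)\<^esub> g) i) h"
    using A[THEN conjunct2, THEN conjunct2, THEN conjunct2, THEN conjunct2, THEN conjunct2, THEN conjunct1, rule_format] .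
  show "\<And>n i g h. i \<le> n \<Longrightarrow> g \<in> carrier (G n) \<Longrightarrow> h \<in> carrier (G n) \<Longrightarrow>
        s n i (g \<otimes>\<^bsub>G n\<^esub> h) =
        s n i g \<otimes>\<^bsub>G (Suc n)\<^esub> s n (act n (inv\<^bsub>G n\<^esub> g) i) h"
    using A[THEN conjunct2, THEN conjunct2, THEN conjunct2, THEN conjunct2, THEN conjunct2, THEN conjunct2, rule_format] .
qed

lemma ss_parts:
  assumes "simplicial_set X d s"
  shows ss_d: "\<And>n i x. i \<le> Suc n \<Longrightarrow> x \<in> X (Suc n) \<Longrightarrow> d n i x \<in> X n"
    and ss_s: "\<And>n i x. i \<le> n \<Longrightarrow> x \<in> X n \<Longrightarrow> s n i x \<in> X (Suc n)"
    and ss_dd: "\<And>n i j x. i < j \<Longrightarrow> j \<le> Suc (Suc n) \<Longrightarrow> x \<in> X (Suc (Suc n)) \<Longrightarrow>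
        d n i (d (Suc n) j x) = d n (j - 1) (d (Suc n) i x)"
    and ss_dslt: "\<And>n i j x. i < j \<Longrightarrow> j \<le> Suc n \<Longrightarrow> x \<in> X (Suc n) \<Longrightarrow>
        d (Suc n) i (s (Suc n) j x) = s n (j - 1) (d n i x)"
    and ss_dseq: "\<And>n j x. j \<le> n \<Longrightarrow> x \<in> X n \<Longrightarrow> d n j (s n j x) = x \<and> d n (Suc j) (s n j x) = x"
    and ss_dsgt: "\<And>n i j x. Suc j < i \<Longrightarrow> i \<le> Suc (Suc n) \<Longrightarrow> x \<in> X (Suc n) \<Longrightarrow>
        d (Suc n) i (s (Suc n) j x) = s n j (d n (i - 1) x)"
proof -
  note A = assms[unfolded simplicial_set_def]
  show "\<And>n i x. i \<le> Suc n \<Longrightarrow> x \<in> X (Suc n) \<Longrightarrow> d n i x \<in> X n"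
    using A[THEN conjunct1, rule_format] .
  show "\<And>n i x. i \<le> n \<Longrightarrow> x \<in> X n \<Longrightarrow> s n i x \<in> X (Suc n)"
    using A[THEN conjunct2, THEN conjunct1, rule_format] .
  show "\<And>n i j x. i < j \<Longrightarrow> j \<le> Suc (Suc n) \<Longrightarrow> x \<in> X (Suc (Suc n)) \<Longrightarrow>
        d n i (d (Suc n) j x) = d n (j - 1) (d (Suc n) i x)"
    using A[THEN conjunct2, THEN conjunct2, THEN conjunct1, rule_format] .
  show "\<And>n i j x. i < j \<Longrightarrow> j \<le> Suc n \<Longrightarrow> x \<in> X (Suc n) \<Longrightarrow>
        d (Suc n) i (s (Suc n) j x) = s n (j - 1) (d n i x)"
    using A[THEN conjunct2, THEN conjunct2, THEN conjunct2, THEN conjunct1, rule_format] .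
  show "\<And>n j x. j \<le> n \<Longrightarrow> x \<in> X n \<Longrightarrow> d n j (s n j x) = x \<and> d n (Suc j) (s n j x) = x"
    using A[THEN conjunct2, THEN conjunct2, THEN conjunct2, THEN conjunct2, THEN conjunct1, rule_format] .
  show "\<And>n i j x. Suc j < i \<Longrightarrow> i \<le> Suc (Suc n) \<Longrightarrow> x \<in> X (Suc n) \<Longrightarrow>
        d (Suc n) i (s (Suc n) j x) = s n j (d n (i - 1) x)"
    using A[THEN conjunct2, THEN conjunct2, THEN conjunct2, THEN conjunct2, THEN conjunct2, THEN conjunct1, rule_format] .
qed

lemma csg_d_one:
  assumes "crossed_simplicial_group G act d s" "i \<le> Suc n"
  shows "d n i \<one>\<^bsub>G (Suc n)\<^esub> = \<one>\<^bsub>G n\<^esub>"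
proof -
  interpret A: group "G (Suc n)" by (rule csg_grp[OF assms(1)])
  interpret B: group "G n" by (rule csg_grp[OF assms(1)])
  have cl: "d n i \<one>\<^bsub>G (Suc n)\<^esub> \<in> carrier (G n)"
    using ss_d[OF csg_ss[OF assms(1)] assms(2)] by simp
  have act1: "act (Suc n) \<one>\<^bsub>G (Suc n)\<^esub> i = i"
    using csg_act1[OF assms] .
  have "d n i (\<one>\<^bsub>G (Suc n)\<^esub> \<otimes>\<^bsub>G (Suc n)\<^esub> \<one>\<^bsub>G (Suc n)\<^esub>)
      = d n i \<one>\<^bsub>G (Suc n)\<^esub> \<otimes>\<^bsub>G n\<^esub> d n (act (Suc n) (inv\<^bsub>G (Suc n)\<^esub> \<one>\<^bsub>G (Suc n)\<^esub>) i) \<one>\<^bsub>G (Suc n)\<^esub>"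
    using csg_dm[OF assms(1) assms(2) A.one_closed A.one_closed] by simp
  then have "d n i \<one>\<^bsub>G (Suc n)\<^esub> = d n i \<one>\<^bsub>G (Suc n)\<^esub> \<otimes>\<^bsub>G n\<^esub> d n i \<one>\<^bsub>G (Suc n)\<^esub>"
    using act1 by simp
  then show ?thesis using cl by (metis B.l_cancel_one')
qed

lemma csg_s_one:
  assumes "crossed_simplicial_group G act d s" "i \<le> n"
  shows "s n i \<one>\<^bsub>G n\<^esub> = \<one>\<^bsub>G (Suc n)\<^esub>"
proof -
  interpret A: group "G (Suc n)" by (rule csg_grp[OF assms(1)])
  interpret B: group "G n" by (rule csg_grp[OF assms(1)])
  have cl: "s n i \<one>\<^bsub>G n\<^esub> \<in> carrier (G (Suc n))"
    using ss_s[OF csg_ss[OF assms(1)] assms(2)] by simp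
  have act1: "act n \<one>\<^bsub>G n\<^esub> i = i"
    using csg_act1[OF assms] .
  have "s n i (\<one>\<^bsub>G n\<^esub> \<otimes>\<^bsub>G n\<^esub> \<one>\<^bsub>G n\<^esub>)
      = s n i \<one>\<^bsub>G n\<^esub> \<otimes>\<^bsub>G (Suc n)\<^esub> s n (act n (inv\<^bsub>G n\<^esub> \<one>\<^bsub>G n\<^esub>) i) \<one>\<^bsub>G n\<^esub>"
    using csg_sm[OF assms(1) assms(2) B.one_closed B.one_closed] by simp
  then have "s n i \<one>\<^bsub>G n\<^esub> = s n i \<one>\<^bsub>G n\<^esub> \<otimes>\<^bsub>G (Suc n)\<^esub> s n i \<one>\<^bsub>G n\<^esub>"
    using act1 by simp
  then show ?thesis using cl by (metis A.l_cancel_one')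
qed


locale ksetup =
  fixes G :: "nat \<Rightarrow> 'a monoid" and act :: "nat \<Rightarrow> 'a \<Rightarrow> nat \<Rightarrow> nat"
    and d s :: "nat \<Rightarrow> nat \<Rightarrow> 'a \<Rightarrow> 'a"
    and N :: "nat \<Rightarrow> 'b monoid" and act' :: "nat \<Rightarrow> 'b \<Rightarrow> nat \<Rightarrow> nat"
    and d' s' :: "nat \<Rightarrow> nat \<Rightarrow> 'b \<Rightarrow> 'b"
    and p :: "nat \<Rightarrow> 'a \<Rightarrow> 'b"
  assumes csg: "crossed_simplicial_group G act d s"
    and sp: "structural_projection G act d s N act' d' s' p"
begin

lemma sp_parts: "crossed_simplicial_group N act' d' s'"
   "csg_morphism G act d s N act' d' s' p"
   "\<And>n g. g \<in> carrier (G n) \<Longrightarrow> p n g = \<one>\<^bsub>N n\<^esub> \<Longrightarrow> g \<in> structural_kernel G act s n"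
proof -
  note A = sp[unfolded structural_projection_def]
  show "crossed_simplicial_group N act' d' s'" using A[THEN conjunct1] .
  show "csg_morphism G act d s N act' d' s' p" using A[THEN conjunct2, THEN conjunct1] .
  show "\<And>n g. g \<in> carrier (G n) \<Longrightarrow> p n g = \<one>\<^bsub>N n\<^esub> \<Longrightarrow> g \<in> structural_kernel G act s n"
    using A[THEN conjunct2, THEN conjunct2, THEN conjunct2, rule_format] by blast
qed

lemma G_grp: "group (G n)" by (rule csg_grp[OF csg])
lemma N_csg: "crossed_simplicial_group N act' d' s'" by (rule sp_parts(1))
lemma N_grp: "group (N n)" by (rule csg_grp[OF N_csg])
lemma ss: "simplicial_set (\<lambda>n. carrier (G n)) d s" by (rule csg_ss[OF csg])
lemma mor: "csg_morphism G act d s N act' d' s' p" by (rule sp_parts(2))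
lemma smap: "simplicial_map (\<lambda>n. carrier (G n)) d s (\<lambda>n. carrier (N n)) d' s' p"
  using mor[unfolded csg_morphism_def, THEN conjunct2, THEN conjunct1] .
lemma p_hom: "p n \<in> hom (G n) (N n)"
  using mor[unfolded csg_morphism_def, THEN conjunct1] by (rule spec)
lemma p_gh: "group_hom (G n) (N n) (p n)"
  unfolding group_hom_def group_hom_axioms_def using p_hom G_grp N_grp by simp

lemma d_closed: "i \<le> Suc n \<Longrightarrow> x \<in> carrier (G (Suc n)) \<Longrightarrow> d n i x \<in> carrier (G n)"
  by (rule ss_d[OF ss])
lemma s_closed: "i \<le> n \<Longrightarrow> x \<in> carrier (G n) \<Longrightarrow> s n i x \<in> carrier (G (Suc n))"
  by (rule ss_s[OF ss])
lemma dd: "i < j \<Longrightarrow> j \<le> Suc (Suc n) \<Longrightarrow> x \<in> carrier (G (Suc (Suc n))) \<Longrightarrow>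
        d n i (d (Suc n) j x) = d n (j - 1) (d (Suc n) i x)"
  by (rule ss_dd[OF ss])
lemma ds_lt: "i < j \<Longrightarrow> j \<le> Suc n \<Longrightarrow> x \<in> carrier (G (Suc n)) \<Longrightarrow>
        d (Suc n) i (s (Suc n) j x) = s n (j - 1) (d n i x)"
  by (rule ss_dslt[OF ss])
lemma ds_eq: "j \<le> n \<Longrightarrow> x \<in> carrier (G n) \<Longrightarrow> d n j (s n j x) = x \<and> d n (Suc j) (s n j x) = x"
  by (rule ss_dseq[OF ss])
lemma ds_gt: "Suc j < i \<Longrightarrow> i \<le> Suc (Suc n) \<Longrightarrow> x \<in> carrier (G (Suc n)) \<Longrightarrow>
        d (Suc n) i (s (Suc n) j x) = s n j (d n (i - 1) x)"
  by (rule ss_dsgt[OF ss])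
lemma d_mult: "i \<le> Suc n \<Longrightarrow> g \<in> carrier (G (Suc n)) \<Longrightarrow> h \<in> carrier (G (Suc n)) \<Longrightarrow>
        d n i (g \<otimes>\<^bsub>G (Suc n)\<^esub> h) =
        d n i g \<otimes>\<^bsub>G n\<^esub> d n (act (Suc n) (inv\<^bsub>G (Suc n)\<^esub> g) i) h"
  by (rule csg_dm[OF csg])
lemma s_mult: "i \<le> n \<Longrightarrow> g \<in> carrier (G n) \<Longrightarrow> h \<in> carrier (G n) \<Longrightarrow>
        s n i (g \<otimes>\<^bsub>G n\<^esub> h) =
        s n i g \<otimes>\<^bsub>G (Suc n)\<^esub> s n (act n (inv\<^bsub>G n\<^esub> g) i) h"
  by (rule csg_sm[OF csg])
lemma p_d: "i \<le> Suc n \<Longrightarrow> x \<in> carrier (G (Suc n)) \<Longrightarrow> p n (d n i x) = d' n i (p (Suc n) x)"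
  using smap[unfolded simplicial_map_def, THEN conjunct2, THEN conjunct1, rule_format] .
lemma p_s: "i \<le> n \<Longrightarrow> x \<in> carrier (G n) \<Longrightarrow> p (Suc n) (s n i x) = s' n i (p n x)"
  using smap[unfolded simplicial_map_def, THEN conjunct2, THEN conjunct2, rule_format] .

definition P :: "nat \<Rightarrow> 'a set" where
  "P n = {g \<in> carrier (G n). p n g = \<one>\<^bsub>N n\<^esub>}"

lemma P_carr: "g \<in> P n \<Longrightarrow> g \<in> carrier (G n)" unfolding P_def by blast

lemma P_act: assumes "g \<in> P n" "j \<le> n" shows "act n g j = j"
proof -
  have "g \<in> structural_kernel G act s n" using assms(1) sp_parts(3) unfolding P_def by blast
  then have K: "\<forall>is. admissible_degen n is \<longrightarrow>
        (\<forall>j \<le> n + length is. act (n + length is) (iter_degen s n is g) j = j)"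
    unfolding structural_kernel_def mem_Collect_eq by (rule conjunct2)
  have a: "admissible_degen n []" unfolding admissible_degen_def by simp
  have "\<forall>j \<le> n + length ([]::nat list). act (n + length ([]::nat list)) (iter_degen s n [] g) j = j"
    using K[THEN spec[of _ "[]"]] a by (rule mp)
  then have "\<forall>j \<le> n. act n g j = j" by simp
  then show ?thesis using assms(2) by blast
qed

lemma P_one: "\<one>\<^bsub>G n\<^esub> \<in> P n"
proof -
  interpret B: group "G n" by (rule G_grp)
  show ?thesis unfolding P_def using group_hom.hom_one[OF p_gh] by simp
qed

lemma P_mult: assumes "g \<in> P n" "h \<in> P n" shows "g \<otimes>\<^bsub>G n\<^esub> h \<in> P n"
proof -
  interpret B: group "G n" by (rule G_grp)
  interpret NB: group "N n" by (rule N_grp)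
  have "g \<in> carrier (G n)" "h \<in> carrier (G n)" "p n g = \<one>\<^bsub>N n\<^esub>" "p n h = \<one>\<^bsub>N n\<^esub>"
    using assms unfolding P_def by auto
  then show ?thesis unfolding P_def using group_hom.hom_mult[OF p_gh] by simp
qed

lemma P_inv: assumes "g \<in> P n" shows "inv\<^bsub>G n\<^esub> g \<in> P n"
proof -
  interpret B: group "G n" by (rule G_grp)
  interpret NB: group "N n" by (rule N_grp)
  have "g \<in> carrier (G n)" "p n g = \<one>\<^bsub>N n\<^esub>"
    using assms unfolding P_def by auto
  then show ?thesis unfolding P_def using group_hom.hom_inv[OF p_gh] by simp
qed

lemma P_d: assumes "g \<in> P (Suc n)" "i \<le> Suc n" shows "d n i g \<in> P n"
proof -
  have g: "g \<in> carrier (G (Suc n))" "p (Suc n) g = \<one>\<^bsub>N (Suc n)\<^esub>" using assms unfolding P_def by auto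
  have "p n (d n i g) = d' n i \<one>\<^bsub>N (Suc n)\<^esub>" using p_d[OF assms(2) g(1)] g(2) by simp
  also have "\<dots> = \<one>\<^bsub>N n\<^esub>" using csg_d_one[OF N_csg assms(2)] .
  finally show ?thesis using d_closed[OF assms(2) g(1)] unfolding P_def by simp
qed

lemma P_s: assumes "g \<in> P n" "i \<le> n" shows "s n i g \<in> P (Suc n)"
proof -
  have g: "g \<in> carrier (G n)" "p n g = \<one>\<^bsub>N n\<^esub>" using assms unfolding P_def by auto
  have "p (Suc n) (s n i g) = s' n i \<one>\<^bsub>N n\<^esub>" using p_s[OF assms(2) g(1)] g(2) by simp
  also have "\<dots> = \<one>\<^bsub>N (Suc n)\<^esub>" using csg_s_one[OF N_csg assms(2)] .
  finally show ?thesis using s_closed[OF assms(2) g(1)] unfolding P_def by simp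
qed

lemma d_hom: assumes "g \<in> P (Suc n)" "h \<in> carrier (G (Suc n))" "i \<le> Suc n"
  shows "d n i (g \<otimes>\<^bsub>G (Suc n)\<^esub> h) = d n i g \<otimes>\<^bsub>G n\<^esub> d n i h"
  using d_mult[OF assms(3) P_carr[OF assms(1)] assms(2)] P_act[OF P_inv[OF assms(1)] assms(3)] by simp

lemma s_hom: assumes "g \<in> P n" "h \<in> carrier (G n)" "i \<le> n"
  shows "s n i (g \<otimes>\<^bsub>G n\<^esub> h) = s n i g \<otimes>\<^bsub>G (Suc n)\<^esub> s n i h"
  using s_mult[OF assms(3) P_carr[OF assms(1)] assms(2)] P_act[OF P_inv[OF assms(1)] assms(3)] by simp

lemma d_inv: assumes "g \<in> P (Suc n)" "i \<le> Suc n"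
  shows "d n i (inv\<^bsub>G (Suc n)\<^esub> g) = inv\<^bsub>G n\<^esub> (d n i g)"
proof -
  interpret A: group "G (Suc n)" by (rule G_grp)
  interpret B: group "G n" by (rule G_grp)
  have g: "g \<in> carrier (G (Suc n))" using P_carr assms by blast
  have "d n i (inv\<^bsub>G (Suc n)\<^esub> g) \<otimes>\<^bsub>G n\<^esub> d n i g = d n i (inv\<^bsub>G (Suc n)\<^esub> g \<otimes>\<^bsub>G (Suc n)\<^esub> g)"
    using d_hom[OF P_inv[OF assms(1)] g assms(2)] by simp
  also have "\<dots> = \<one>\<^bsub>G n\<^esub>" using g csg_d_one[OF csg assms(2)] by simp
  finally have e: "d n i (inv\<^bsub>G (Suc n)\<^esub> g) \<otimes>\<^bsub>G n\<^esub> d n i g = \<one>\<^bsub>G n\<^esub>" .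
  show ?thesis using B.inv_equality[OF e d_closed[OF assms(2) g] d_closed[OF assms(2) A.inv_closed[OF g]]] by simp
qed

end
context ksetup
begin

lemma phase1:
  assumes k: "k \<le> Suc n" and ys: "\<And>i. i \<le> Suc n \<Longrightarrow> i \<noteq> k \<Longrightarrow> ys i \<in> P n"
  and compat: "\<And>i j. i < j \<Longrightarrow> j \<le> Suc n \<Longrightarrow> i \<noteq> k \<Longrightarrow> j \<noteq> k \<Longrightarrow> 0 < n \<Longrightarrow>
      d (n - 1) i (ys j) = d (n - 1) (j - 1) (ys i)"
  shows "r \<le> k \<Longrightarrow> \<exists>g \<in> P (Suc n). \<forall>i<r. d n i g = ys i"
proof (induction r)
  case 0
  then show ?case using P_one by blast
next
  case (Suc r)
  interpret A: group "G (Suc n)" by (rule G_grp)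
  interpret B: group "G n" by (rule G_grp)
  from Suc obtain g where g: "g \<in> P (Suc n)" and gi: "\<forall>i<r. d n i g = ys i" by auto
  have gc: "g \<in> carrier (G (Suc n))" using g P_carr by blast
  have rn: "r \<le> n" using Suc.prems k by simp
  have ysr: "ys r \<in> P n" using ys rn Suc.prems by simp
  define u where "u = ys r \<otimes>\<^bsub>G n\<^esub> inv\<^bsub>G n\<^esub> (d n r g)"
  have dg: "d n r g \<in> P n" using P_d g rn by simp
  have u: "u \<in> P n" unfolding u_def using P_mult P_inv ysr dg by blast
  have su: "s n r u \<in> P (Suc n)" using P_s u rn by blast
  have uc: "u \<in> carrier (G n)" using u P_carr by blast
  have ysrc: "ys r \<in> carrier (G n)" using ysr P_carr by blast
  have dgc: "d n r g \<in> carrier (G n)" using dg P_carr by blast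
  show ?case
  proof (intro bexI[of _ "s n r u \<otimes>\<^bsub>G (Suc n)\<^esub> g"] allI impI)
    show "s n r u \<otimes>\<^bsub>G (Suc n)\<^esub> g \<in> P (Suc n)" using P_mult su g by blast
    fix i assume "i < Suc r"
    then consider "i = r" | "i < r" by linarith
    then show "d n i (s n r u \<otimes>\<^bsub>G (Suc n)\<^esub> g) = ys i"
    proof cases
      case 1
      have "d n i (s n r u \<otimes>\<^bsub>G (Suc n)\<^esub> g) = u \<otimes>\<^bsub>G n\<^esub> d n r g"
        using d_hom[OF su gc] 1 rn ds_eq[OF rn uc] by simp
      also have "\<dots> = ys r" unfolding u_def using ysrc dgc by (simp add: B.m_assoc)
      finally show ?thesis using 1 by simp
    next
      case 2
      then obtain m where m: "n = Suc m" using rn by (cases n) auto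
      have ysi: "ys i \<in> P n" using ys 2 Suc.prems k by simp
      have gc': "g \<in> carrier (G (Suc (Suc m)))" using gc m by simp
      have "d m i u = d m i (ys r) \<otimes>\<^bsub>G m\<^esub> inv\<^bsub>G m\<^esub> (d m i (d n r g))"
        unfolding u_def using d_hom[of "ys r" m "inv\<^bsub>G n\<^esub> (d n r g)" i] d_inv[of "d n r g" m i]
          ysr dg m 2 rn B.inv_closed[OF dgc] by simp
      also have "d m i (d n r g) = d m (r - 1) (ys i)"
        using dd[of i r m g] 2 rn m gc' gi by simp
      also have "d m i (ys r) = d m (r - 1) (ys i)"
        using compat[of i r] 2 rn m Suc.prems by simp
      finally have du0: "d m i u = d m (r - 1) (ys i) \<otimes>\<^bsub>G m\<^esub> inv\<^bsub>G m\<^esub> (d m (r - 1) (ys i))" .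
      have xc: "d m (r - 1) (ys i) \<in> carrier (G m)"
        using d_closed[of "r - 1" m "ys i"] P_carr[OF ysi] m rn by simp
      have du: "d m i u = \<one>\<^bsub>G m\<^esub>" using du0 group.r_inv[OF G_grp xc] by simp
      have "d n i (s n r u \<otimes>\<^bsub>G (Suc n)\<^esub> g) = d n i (s n r u) \<otimes>\<^bsub>G n\<^esub> d n i g"
        using d_hom[OF su gc] 2 rn by simp
      also have "d n i (s n r u) = s m (r - 1) (d m i u)"
        using ds_lt[of i r m u] 2 rn m uc by simp
      also have "\<dots> = \<one>\<^bsub>G n\<^esub>" using du csg_s_one[OF csg, of "r - 1" m] m rn by simp
      finally show ?thesis using gi 2 P_carr[OF ysi] by simp
    qed
  qed
qed

end
context ksetup
begin

lemma phase2:
  assumes k: "k \<le> Suc n" and ys: "\<And>i. i \<le> Suc n \<Longrightarrow> i \<noteq> k \<Longrightarrow> ys i \<in> P n"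
  and compat: "\<And>i j. i < j \<Longrightarrow> j \<le> Suc n \<Longrightarrow> i \<noteq> k \<Longrightarrow> j \<noteq> k \<Longrightarrow> 0 < n \<Longrightarrow>
      d (n - 1) i (ys j) = d (n - 1) (j - 1) (ys i)"
  shows "t \<le> Suc n - k \<Longrightarrow> \<exists>g \<in> P (Suc n). (\<forall>i<k. d n i g = ys i) \<and>
            (\<forall>i. Suc n - t < i \<longrightarrow> i \<le> Suc n \<longrightarrow> d n i g = ys i)"
proof (induction t)
  case 0
  then show ?case using phase1[OF k ys compat, of k] by auto
next
  case (Suc t)
  interpret A: group "G (Suc n)" by (rule G_grp)
  interpret B: group "G n" by (rule G_grp)
  from Suc obtain g where g: "g \<in> P (Suc n)" and gl: "\<forall>i<k. d n i g = ys i"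
    and gh: "\<forall>i. Suc n - t < i \<longrightarrow> i \<le> Suc n \<longrightarrow> d n i g = ys i" by auto
  define r where "r = Suc n - t"
  have gc: "g \<in> carrier (G (Suc n))" using g P_carr by blast
  have rk: "k < r" "r \<le> Suc n" "0 < r" using Suc.prems k unfolding r_def by auto
  have rn: "r - 1 \<le> n" using rk by simp
  have ysr: "ys r \<in> P n" using ys rk by simp
  define u where "u = inv\<^bsub>G n\<^esub> (d n r g) \<otimes>\<^bsub>G n\<^esub> ys r"
  have dg: "d n r g \<in> P n" using P_d g rk by simp
  have idg: "inv\<^bsub>G n\<^esub> (d n r g) \<in> P n" using P_inv dg by blast
  have u: "u \<in> P n" unfolding u_def using P_mult P_inv ysr dg by blast
  have su: "s n (r - 1) u \<in> P (Suc n)" using P_s u rn by blast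
  have suc: "s n (r - 1) u \<in> carrier (G (Suc n))" using su P_carr by blast
  have uc: "u \<in> carrier (G n)" using u P_carr by blast
  have ysrc: "ys r \<in> carrier (G n)" using ysr P_carr by blast
  have dgc: "d n r g \<in> carrier (G n)" using dg P_carr by blast
  have split: "d n i (g \<otimes>\<^bsub>G (Suc n)\<^esub> s n (r - 1) u) = d n i g \<otimes>\<^bsub>G n\<^esub> d n i (s n (r - 1) u)"
    if "i \<le> Suc n" for i using d_hom[OF g suc that] .
  show ?case
  proof (intro bexI[of _ "g \<otimes>\<^bsub>G (Suc n)\<^esub> s n (r - 1) u"] conjI allI impI)
    show "g \<otimes>\<^bsub>G (Suc n)\<^esub> s n (r - 1) u \<in> P (Suc n)" using P_mult su g by blast
  next
    fix i assume i: "i < k"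
    then obtain m where m: "n = Suc m" using rk by (cases n) auto
    have ysi: "ys i \<in> P n" using ys i k by simp
    have gc': "g \<in> carrier (G (Suc (Suc m)))" using gc m by simp
    have "d m i u = inv\<^bsub>G m\<^esub> (d m i (d n r g)) \<otimes>\<^bsub>G m\<^esub> d m i (ys r)"
      unfolding u_def using d_hom[of "inv\<^bsub>G n\<^esub> (d n r g)" m "ys r" i] d_inv[of "d n r g" m i]
        ysrc dg m i rk idg by simp
    also have "d m i (d n r g) = d m (r - 1) (ys i)"
      using dd[of i r m g] i rk m gc' gl by simp
    also have "d m i (ys r) = d m (r - 1) (ys i)"
      using compat[of i r] i rk m by simp
    finally have du0: "d m i u = inv\<^bsub>G m\<^esub> (d m (r - 1) (ys i)) \<otimes>\<^bsub>G m\<^esub> d m (r - 1) (ys i)" .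
    have xc: "d m (r - 1) (ys i) \<in> carrier (G m)"
      using d_closed[of "r - 1" m "ys i"] P_carr[OF ysi] m rn by simp
    have du: "d m i u = \<one>\<^bsub>G m\<^esub>" using du0 group.l_inv[OF G_grp xc] by simp
    have ir: "i < r - 1" using i rk by linarith
    have r1: "r - 1 \<le> Suc m" using rn m by simp
    have uc': "u \<in> carrier (G (Suc m))" using uc m by simp
    have e1: "d (Suc m) i (s (Suc m) (r - 1) u) = s m (r - 1 - 1) (d m i u)"
      using ds_lt[OF ir r1 uc'] .
    have r2: "r - 1 - 1 \<le> m" using r1 by linarith
    have "d n i (s n (r - 1) u) = s m (r - 1 - 1) (d m i u)" using e1 m by simp
    also have "\<dots> = \<one>\<^bsub>G n\<^esub>" using du csg_s_one[OF csg r2] m by simp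
    finally show "d n i (g \<otimes>\<^bsub>G (Suc n)\<^esub> s n (r - 1) u) = ys i"
      using split[of i] gl i rk P_carr[OF ysi] by simp
  next
    fix i assume i1: "Suc n - Suc t < i" and i2: "i \<le> Suc n"
    then consider "i = r" | "r < i" unfolding r_def by linarith
    then show "d n i (g \<otimes>\<^bsub>G (Suc n)\<^esub> s n (r - 1) u) = ys i"
    proof cases
      case 1
      have "d n r (s n (r - 1) u) = u" using ds_eq[OF rn uc] rk by simp
      then have "d n i (g \<otimes>\<^bsub>G (Suc n)\<^esub> s n (r - 1) u) = d n r g \<otimes>\<^bsub>G n\<^esub> u"
        using split[of i] 1 i2 by simp
      also have "\<dots> = ys r" unfolding u_def using ysrc dgc by (simp add: B.m_assoc[symmetric])
      finally show ?thesis using 1 by simp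
    next
      case 2
      then obtain m where m: "n = Suc m" using rk i2 by (cases n) auto
      have ysi: "ys i \<in> P n" using ys 2 i2 rk by simp
      have gc': "g \<in> carrier (G (Suc (Suc m)))" using gc m by simp
      have "d m (i - 1) u = inv\<^bsub>G m\<^esub> (d m (i - 1) (d n r g)) \<otimes>\<^bsub>G m\<^esub> d m (i - 1) (ys r)"
        unfolding u_def using d_hom[of "inv\<^bsub>G n\<^esub> (d n r g)" m "ys r" "i - 1"] d_inv[of "d n r g" m "i - 1"]
          ysrc dg m i2 idg by simp
      also have "d m (i - 1) (d n r g) = d m r (ys i)"
        using dd[of r i m g] 2 i2 m gc' gh r_def by simp
      also have "d m (i - 1) (ys r) = d m r (ys i)"
        using compat[of r i] 2 i2 rk m by simp
      finally have du0: "d m (i - 1) u = inv\<^bsub>G m\<^esub> (d m r (ys i)) \<otimes>\<^bsub>G m\<^esub> d m r (ys i)" .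
      have xc: "d m r (ys i) \<in> carrier (G m)"
        using d_closed[of r m "ys i"] P_carr[OF ysi] m rk 2 i2 by simp
      have du: "d m (i - 1) u = \<one>\<^bsub>G m\<^esub>" using du0 group.l_inv[OF G_grp xc] by simp
      have "d n i (s n (r - 1) u) = s m (r - 1) (d m (i - 1) u)"
        using ds_gt[of "r - 1" i m u] 2 i2 rk m uc by simp
      also have "\<dots> = \<one>\<^bsub>G n\<^esub>" using du csg_s_one[OF csg, of "r - 1" m] m rk 2 i2 by simp
      finally show ?thesis using split[of i] gh 2 i2 r_def P_carr[OF ysi] by simp
    qed
  qed
qed

lemma moore:
  assumes k: "k \<le> Suc n" and ys: "\<And>i. i \<le> Suc n \<Longrightarrow> i \<noteq> k \<Longrightarrow> ys i \<in> P n"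
  and compat: "\<And>i j. i < j \<Longrightarrow> j \<le> Suc n \<Longrightarrow> i \<noteq> k \<Longrightarrow> j \<noteq> k \<Longrightarrow> 0 < n \<Longrightarrow>
      d (n - 1) i (ys j) = d (n - 1) (j - 1) (ys i)"
  shows "\<exists>g \<in> P (Suc n). \<forall>i. i \<le> Suc n \<longrightarrow> i \<noteq> k \<longrightarrow> d n i g = ys i"
proof -
  obtain g where "g \<in> P (Suc n)" "\<forall>i<k. d n i g = ys i"
    "\<forall>i. Suc n - (Suc n - k) < i \<longrightarrow> i \<le> Suc n \<longrightarrow> d n i g = ys i"
    using phase2[OF k ys compat, of "Suc n - k"] by auto
  then show ?thesis using k by (metis diff_diff_cancel linorder_neqE_nat)
qed

end

theorem theoremB1:
  fixes G :: "nat \<Rightarrow> 'a monoid" and act :: "nat \<Rightarrow> 'a \<Rightarrow> nat \<Rightarrow> nat"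
    and d s :: "nat \<Rightarrow> nat \<Rightarrow> 'a \<Rightarrow> 'a"
    and N :: "nat \<Rightarrow> 'b monoid" and act' :: "nat \<Rightarrow> 'b \<Rightarrow> nat \<Rightarrow> nat"
    and d' s' :: "nat \<Rightarrow> nat \<Rightarrow> 'b \<Rightarrow> 'b"
    and p :: "nat \<Rightarrow> 'a \<Rightarrow> 'b" and \<eta> :: "nat \<Rightarrow> 'b \<Rightarrow> 'a"
  assumes "crossed_simplicial_group G act d s"
    and "structural_projection G act d s N act' d' s' p"
    and "simplicial_map (\<lambda>n. carrier (N n)) d' s' (\<lambda>n. carrier (G n)) d s \<eta>"
    and "\<And>n x. x \<in> carrier (N n) \<Longrightarrow> p n (\<eta> n x) = x"
  shows "kan_fibration (\<lambda>n. carrier (G n)) d s (\<lambda>n. carrier (N n)) d' s' p"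
proof -
  interpret K: ksetup G act d s N act' d' s' p using assms(1,2) by unfold_locales
  have eta_c: "\<And>n x. x \<in> carrier (N n) \<Longrightarrow> \<eta> n x \<in> carrier (G n)"
    using assms(3) unfolding simplicial_map_def by blast
  show ?thesis unfolding kan_fibration_def
  proof (intro conjI allI impI)
    show "simplicial_map (\<lambda>n. carrier (G n)) d s (\<lambda>n. carrier (N n)) d' s' p" by (rule K.smap)
  next
    fix n k xs y
    assume k: "k \<le> Suc n" and xs: "\<forall>i. i \<le> Suc n \<longrightarrow> i \<noteq> k \<longrightarrow> xs i \<in> carrier (G n)"
      and cx: "\<forall>i j. i < j \<longrightarrow> j \<le> Suc n \<longrightarrow> i \<noteq> k \<longrightarrow> j \<noteq> k \<longrightarrow> 0 < n \<longrightarrow>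
            d (n - 1) i (xs j) = d (n - 1) (j - 1) (xs i)"
      and y: "y \<in> carrier (N (Suc n))"
      and yx: "\<forall>i. i \<le> Suc n \<longrightarrow> i \<noteq> k \<longrightarrow> d' n i y = p n (xs i)"
    interpret A: group "G (Suc n)" by (rule K.G_grp)
    interpret B: group "G n" by (rule K.G_grp)
    interpret NB: group "N n" by (rule K.N_grp)
    define z where "z = \<eta> (Suc n) y"
    have zc: "z \<in> carrier (G (Suc n))" using eta_c y z_def by blast
    have pz: "p (Suc n) z = y" using assms(4) y z_def by blast
    define h where "h i = xs i \<otimes>\<^bsub>G n\<^esub> inv\<^bsub>G n\<^esub> (d n i z)" for i
    have dzc: "\<And>i. i \<le> Suc n \<Longrightarrow> d n i z \<in> carrier (G n)" using K.d_closed zc by blast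
    have hP: "h i \<in> K.P n" if "i \<le> Suc n" "i \<noteq> k" for i
    proof -
      have "p n (h i) = p n (xs i) \<otimes>\<^bsub>N n\<^esub> inv\<^bsub>N n\<^esub> (p n (d n i z))"
        unfolding h_def using group_hom.hom_mult[OF K.p_gh] group_hom.hom_inv[OF K.p_gh]
          xs that dzc B.inv_closed by simp
      also have "p n (d n i z) = p n (xs i)" using K.p_d[OF that(1) zc] pz yx that by simp
      finally have e: "p n (h i) = p n (xs i) \<otimes>\<^bsub>N n\<^esub> inv\<^bsub>N n\<^esub> (p n (xs i))" .
      have pc: "p n (xs i) \<in> carrier (N n)" using hom_in_carrier[OF K.p_hom] xs that by simp
      have "p n (h i) = \<one>\<^bsub>N n\<^esub>" using e NB.r_inv[OF pc] by simp
      then show ?thesis unfolding K.P_def h_def using xs that dzc by auto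
    qed
    have hx: "xs i = h i \<otimes>\<^bsub>G n\<^esub> d n i z" if "i \<le> Suc n" "i \<noteq> k" for i
      unfolding h_def using xs that dzc by (simp add: B.m_assoc)
    have dh: "d (n - 1) a (h i) = d (n - 1) a (xs i) \<otimes>\<^bsub>G (n - 1)\<^esub> inv\<^bsub>G (n - 1)\<^esub> (d (n - 1) a (d n i z))"
      if "i \<le> Suc n" "i \<noteq> k" "a \<le> n" "0 < n" for i a
    proof -
      have n0: "0 < n" using that(4) .
      obtain m where m: "n = Suc m" using n0 by (cases n) auto
      interpret C: group "G m" by (rule K.G_grp)
      have "d m a (xs i) = d m a (h i) \<otimes>\<^bsub>G m\<^esub> d m a (d n i z)"
        using hx[OF that(1,2)] K.d_hom[of "h i" m "d n i z" a] hP[OF that(1,2)] dzc[OF that(1)] m that by simp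
      moreover have "d m a (h i) \<in> carrier (G m)" using K.P_d hP that m K.P_carr by auto
      moreover have "d m a (d n i z) \<in> carrier (G m)" using K.d_closed dzc that m by auto
      ultimately show ?thesis using m by (simp add: C.m_assoc)
    qed
    have ch: "d (n - 1) i (h j) = d (n - 1) (j - 1) (h i)"
      if "i < j" "j \<le> Suc n" "i \<noteq> k" "j \<noteq> k" "0 < n" for i j
    proof -
      have n0: "0 < n" using that(5) .
      obtain m where m: "n = Suc m" using n0 by (cases n) auto
      have "d m i (d n j z) = d m (j - 1) (d n i z)" using K.dd[of i j m z] that zc m by simp
      then show ?thesis using dh[of j i] dh[of i "j - 1"] cx that m by simp
    qed
    obtain hh where hh: "hh \<in> K.P (Suc n)" and hhd: "\<forall>i. i \<le> Suc n \<longrightarrow> i \<noteq> k \<longrightarrow> d n i hh = h i"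
      using K.moore[OF k hP ch] by blast
    have hhc: "hh \<in> carrier (G (Suc n))" using hh K.P_carr by blast
    show "\<exists>x \<in> carrier (G (Suc n)). (\<forall>i. i \<le> Suc n \<longrightarrow> i \<noteq> k \<longrightarrow> d n i x = xs i) \<and> p (Suc n) x = y"
    proof (intro bexI[of _ "hh \<otimes>\<^bsub>G (Suc n)\<^esub> z"] conjI allI impI)
      show "hh \<otimes>\<^bsub>G (Suc n)\<^esub> z \<in> carrier (G (Suc n))" using hhc zc by simp
      fix i assume "i \<le> Suc n" "i \<noteq> k"
      then show "d n i (hh \<otimes>\<^bsub>G (Suc n)\<^esub> z) = xs i"
        using K.d_hom[OF hh zc] hhd hx by simp
    next
      have "p (Suc n) hh = \<one>\<^bsub>N (Suc n)\<^esub>" using hh unfolding K.P_def by blast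
      then show "p (Suc n) (hh \<otimes>\<^bsub>G (Suc n)\<^esub> z) = y"
        using group_hom.hom_mult[OF K.p_gh] hhc zc pz y group.is_monoid[OF K.N_grp]
        by (simp add: monoid.l_one)
    qed
  qed
qed

end
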